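(* Let $R\in\mathbb{R}[x]$, $\delta\in\mathbb{R}$, and $Q=R\circ x^2\circ(x-\delta)$, with $n=\deg Q$. 1) If $n\ge6$ and $Ch_2(Q)=Ch_3(Q)=0$, then $4\delta$ is not an algebraic integer unless $\delta=0$. 2) If $n\ge9$ and $Ch_2(Q)=Ch_4(Q)=Ch_5(Q)=0$, then $4\delta$ is not an algebraic integer unless $\delta=0$.
   Context: $T_k$ denotes the Chebyshev polynomial of the first kind of degree $k$, $T_k(\cos\phi)=\cos(k\phi)$. Every real polynomial $Q$ of degree $n$ can be uniquely written as $Q=\sum_{k=0}^n d_kT_k$ with $d_k\in\mathbb{R}$; set $Ch_i(Q)=d_{n-i}$ for $0\le i\le n$. An algebraic integer is a complex root of a monic polynomial with integer coefficients. $Q(x)=R((x-\delta)^2)$. *)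

theory Defs
  imports "HOL-Computational_Algebra.Polynomial" Complex_Main
begin

fun cheb_T :: "nat \<Rightarrow> real poly" where
  "cheb_T 0 = 1"
| "cheb_T (Suc 0) = [:0, 1:]"
| "cheb_T (Suc (Suc k)) = [:0, 2:] * cheb_T (Suc k) - cheb_T k"

definition cheb_coeffs :: "real poly \<Rightarrow> nat \<Rightarrow> real" where
  "cheb_coeffs Q = (THE d. (\<forall>k>degree Q. d k = 0) \<and>
       Q = (\<Sum>k\<le>degree Q. smult (d k) (cheb_T k)))"

text \<open>Ch_i(Q) = d_{n-i}, meaningful for 0 \<le> i \<le> n.\<close>
definition Ch :: "nat \<Rightarrow> real poly \<Rightarrow> real" where
  "Ch i Q = cheb_coeffs Q (degree Q - i)"

end

theory Submission
  imports Defs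
begin


lemma coeff_X2_mult: "coeff ([:0, 2:] * p) j = (case j of 0 \<Rightarrow> 0 | Suc i \<Rightarrow> 2 * coeff p i)"
  by (simp add: coeff_pCons split: nat.splits)

lemma cheb_rec_coeff:
  "coeff (cheb_T (Suc (Suc k))) j = (case j of 0 \<Rightarrow> 0 | Suc i \<Rightarrow> 2 * coeff (cheb_T (Suc k)) i) - coeff (cheb_T k) j"
  by (simp add: coeff_pCons split: nat.split)

lemma cheb_coeff_gt: "k < j \<Longrightarrow> coeff (cheb_T k) j = 0"
proof (induction k arbitrary: j rule: cheb_T.induct)
  case 1 then show ?case by (simp add: coeff_1 )
next
  case 2 then show ?case by (simp add: coeff_pCons split: nat.splits)
next
  case (3 k) then show ?case by (simp del: cheb_T.simps(3) add: cheb_rec_coeff split: nat.splits)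
qed

lemma cheb_degree: "degree (cheb_T k) \<le> k"
  by (rule degree_le) (auto intro: cheb_coeff_gt)

lemma cheb_coeff_parity: "odd (k + j) \<Longrightarrow> coeff (cheb_T k) j = 0"
proof (induction k arbitrary: j rule: cheb_T.induct)
  case 1 then show ?case by (cases j) (simp_all add: coeff_1)
next
  case 2 then show ?case by (auto simp add: coeff_pCons split: nat.splits)
next
  case (3 k) then show ?case by (auto simp del: cheb_T.simps(3) simp add: cheb_rec_coeff split: nat.splits)
qed

lemma cheb_lead: "coeff (cheb_T (Suc k)) (Suc k) = 2 ^ k"
proof (induction k rule: less_induct)
  case (less k)
  show ?case
  proof (cases k)
    case 0 then show ?thesis by simp
  next
    case (Suc m)
    have "coeff (cheb_T (Suc (Suc m))) (Suc (Suc m)) = 2 * coeff (cheb_T (Suc m)) (Suc m)"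
      by (simp del: cheb_T.simps(3) add: cheb_rec_coeff cheb_coeff_gt)
    then show ?thesis using less[of m] Suc by simp
  qed
qed

lemma cheb_lead_nz: "coeff (cheb_T k) k \<noteq> 0"
  by (cases k) (simp_all add: cheb_lead)

lemma cheb_off2: "coeff (cheb_T (k + 3)) (k + 1) = - (real k + 3) * 2 ^ k"
proof (induction k)
  case 0
  have "coeff (cheb_T 3) 1 = -3" by (simp add: numeral_3_eq_3 cheb_rec_coeff)
  then show ?case by simp
next
  case (Suc k)
  have "coeff (cheb_T (Suc k + 3)) (Suc k + 1) = 2 * coeff (cheb_T (k + 3)) (k+1) - coeff (cheb_T (Suc k + 1)) (Suc k + 1)"
    by (simp del: cheb_T.simps(3) add: cheb_rec_coeff numeral_3_eq_3)
  also have "coeff (cheb_T (Suc k + 1)) (Suc k + 1) = 2 ^ (Suc k)"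
    using cheb_lead[of "Suc k"] by simp
  finally show ?case using Suc by (simp add: algebra_simps)
qed

lemma cheb_off4: "coeff (cheb_T (k + 5)) (k + 1) = (real k + 5) * (real k + 2) * 2 ^ k / 2"
proof (induction k)
  case 0
  have "coeff (cheb_T 5) 1 = 5" by (simp add: eval_nat_numeral cheb_rec_coeff)
  then show ?case by simp
next
  case (Suc k)
  have "coeff (cheb_T (Suc k + 5)) (Suc k + 1) = 2 * coeff (cheb_T (k + 5)) (k+1) - coeff (cheb_T (k + 4)) (k + 2)"
    by (simp del: cheb_T.simps(3) add: cheb_rec_coeff eval_nat_numeral)
  also have "coeff (cheb_T (k + 4)) (k + 2) = - (real (Suc k) + 3) * 2 ^ (Suc k)"
    using cheb_off2[of "Suc k"] by (simp add: eval_nat_numeral)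
  finally show ?case using Suc by (simp add: algebra_simps)
qed



lemma cheb_exists:
  "degree Q \<le> N \<Longrightarrow> \<exists>d. (\<forall>k>N. d k = 0) \<and> Q = (\<Sum>k\<le>N. smult (d k) (cheb_T k))"
proof (induction N arbitrary: Q)
  case 0
  then have "Q = [:coeff Q 0:]" using degree_0_id[of Q] by simp
  then show ?case
    by (intro exI[of _ "\<lambda>k. if k = 0 then coeff Q 0 else 0"]) auto
next
  case (Suc N)
  define c where "c = coeff Q (Suc N) / coeff (cheb_T (Suc N)) (Suc N)"
  define Q' where "Q' = Q - smult c (cheb_T (Suc N))"
  have "degree Q' \<le> N"
  proof (rule degree_le, intro allI impI)
    fix i assume "N < i"
    show "coeff Q' i = 0"
    proof (cases "i = Suc N")
      case True then show ?thesis using cheb_lead_nz[of "Suc N"] by (simp add: Q'_def c_def)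
    next
      case False
      then have "Suc N < i" using \<open>N < i\<close> by simp
      then show ?thesis using Suc.prems cheb_coeff_gt[of "Suc N" i]
        by (simp add: Q'_def coeff_eq_0)
    qed
  qed
  from Suc.IH[OF this] obtain d where d: "\<forall>k>N. d k = 0" "Q' = (\<Sum>k\<le>N. smult (d k) (cheb_T k))" by blast
  show ?case
  proof (intro exI[of _ "d(Suc N := c)"] conjI)
    show "\<forall>k>Suc N. (d(Suc N := c)) k = 0" using d(1) by auto
    have "(\<Sum>k\<le>Suc N. smult ((d(Suc N := c)) k) (cheb_T k)) = (\<Sum>k\<le>N. smult (d k) (cheb_T k)) + smult c (cheb_T (Suc N))"
      by (simp add: sum.atMost_Suc)
    also have "\<dots> = Q" using d(2) by (simp add: Q'_def)
    finally show "Q = (\<Sum>k\<le>Suc N. smult ((d(Suc N := c)) k) (cheb_T k))" by simp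
  qed
qed

lemma cheb_indep:
  "(\<Sum>k\<le>N. smult (e k) (cheb_T k)) = 0 \<Longrightarrow> k \<le> N \<Longrightarrow> e k = 0"
proof (induction N arbitrary: k)
  case 0 then show ?case by simp
next
  case (Suc N)
  have "coeff (\<Sum>k\<le>Suc N. smult (e k) (cheb_T k)) (Suc N) = e (Suc N) * coeff (cheb_T (Suc N)) (Suc N)"
    by (simp add: sum.atMost_Suc coeff_sum cheb_coeff_gt)
  moreover have "coeff (\<Sum>k\<le>Suc N. smult (e k) (cheb_T k)) (Suc N) = 0"
    using Suc.prems(1) by (simp only: coeff_0)
  ultimately have eS: "e (Suc N) = 0" using cheb_lead_nz[of "Suc N"] by simp
  then have "(\<Sum>k\<le>N. smult (e k) (cheb_T k)) = 0" using Suc.prems(1) by (simp add: sum.atMost_Suc)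
  then show ?case using Suc.IH eS Suc.prems(2) by (cases "k = Suc N") auto
qed

lemma cheb_coeffs_prop:
  "(\<forall>k>degree Q. cheb_coeffs Q k = 0) \<and> Q = (\<Sum>k\<le>degree Q. smult (cheb_coeffs Q k) (cheb_T k))"
proof -
  let ?P = "\<lambda>d. (\<forall>k>degree Q. d k = 0) \<and> Q = (\<Sum>k\<le>degree Q. smult (d k) (cheb_T k))"
  have "\<exists>!d. ?P d"
  proof (rule ex_ex1I)
    show "\<exists>d. ?P d" using cheb_exists[of Q "degree Q"] by simp
  next
    fix d d' assume a: "?P d" "?P d'"
    have "(\<Sum>k\<le>degree Q. smult (d k - d' k) (cheb_T k)) = 0"
      using a by (simp add: smult_diff_left sum_subtractf)
    then have "\<forall>k\<le>degree Q. d k - d' k = 0" using cheb_indep[of "\<lambda>k. d k - d' k"] by blast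
    then show "d = d'" using a by (metis diff_eq_eq add_0 not_le ext)
  qed
  then show ?thesis unfolding cheb_coeffs_def by (rule theI')
qed

lemma coeff_via_cheb:
  "coeff Q j = (\<Sum>k\<le>degree Q. cheb_coeffs Q k * coeff (cheb_T k) j)"
proof -
  have "coeff Q j = coeff (\<Sum>k\<le>degree Q. smult (cheb_coeffs Q k) (cheb_T k)) j"
    using cheb_coeffs_prop[of Q] by metis
  then show ?thesis by (simp add: coeff_sum)
qed

lemma sum_top:
  fixes f :: "nat \<Rightarrow> 'a::comm_monoid_add"
  assumes "\<forall>k<j. f k = 0"
  shows "(\<Sum>k\<le>j+t. f k) = (\<Sum>i\<le>t. f (j+i))"
proof (induction t)
  case 0
  have "(\<Sum>k\<le>j. f k) = f j + (\<Sum>k<j. f k)"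
    by (simp add: lessThan_Suc_atMost[symmetric] add.commute)
  then show ?case using assms by simp
next
  case (Suc t) then show ?case by (simp add: sum.atMost_Suc)
qed

lemma coeff_pcompose_shift:
  fixes p :: "real poly"
  shows "coeff (p \<circ>\<^sub>p [:a, 1:]) j = (\<Sum>i\<le>degree p. coeff p i * (if j \<le> i then of_nat (i choose j) * a ^ (i - j) else 0))"
proof -
  have "p \<circ>\<^sub>p [:a, 1:] = (\<Sum>i\<le>degree p. [:coeff p i:] * [:a, 1:] ^ i)"
    unfolding pcompose_altdef poly_altdef by (simp add: degree_map_poly coeff_map_poly)
  then have "coeff (p \<circ>\<^sub>p [:a, 1:]) j = (\<Sum>i\<le>degree p. coeff p i * coeff ([:a, 1:] ^ i) j)"
    by (simp add: coeff_sum)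
  also have "\<dots> = (\<Sum>i\<le>degree p. coeff p i * (if j \<le> i then of_nat (i choose j) * a ^ (i - j) else 0))"
  proof (rule sum.cong[OF refl])
    fix i
    show "coeff p i * coeff ([:a, 1:] ^ i) j = coeff p i * (if j \<le> i then of_nat (i choose j) * a ^ (i - j) else 0)"
    proof (cases "j \<le> i")
      case True then show ?thesis by (simp add: coeff_linear_poly_power)
    next
      case False
      have "degree ([:a, 1:] ^ i) \<le> i"
        by (metis degree_linear_power order_refl)
      then show ?thesis using False by (simp add: coeff_eq_0)
    qed
  qed
  finally show ?thesis .
qed

lemma even_shift:
  fixes R :: "real poly"
  assumes "Q = R \<circ>\<^sub>p ([:- \<delta>, 1:] ^ 2)" and "odd j"
  shows "coeff (Q \<circ>\<^sub>p [:\<delta>, 1:]) j = 0"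
proof -
  have "[:- \<delta>, 1:] ^ 2 \<circ>\<^sub>p [:\<delta>, 1:] = [:0,0,1:]"
    by (simp add: power2_eq_square pcompose_mult pcompose_pCons)
  then have P: "Q \<circ>\<^sub>p [:\<delta>, 1:] = R \<circ>\<^sub>p [:0,0,1:]"
    using assms(1) by (simp add: pcompose_assoc[symmetric])
  have "[:0,0,1::real:] \<circ>\<^sub>p [:0, -1:] = [:0,0,1:]"
    by (simp add: pcompose_pCons)
  then have "(Q \<circ>\<^sub>p [:\<delta>, 1:]) \<circ>\<^sub>p [:0, -1:] = Q \<circ>\<^sub>p [:\<delta>, 1:]"
    using P by (simp add: pcompose_assoc[symmetric])
  then have "(-1) ^ j * coeff (Q \<circ>\<^sub>p [:\<delta>, 1:]) j = coeff (Q \<circ>\<^sub>p [:\<delta>, 1:]) j"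
    by (metis coeff_pcompose_linear)
  then show ?thesis using assms(2) by simp
qed



lemma mpi_add: "map_poly (of_int :: int \<Rightarrow> 'a::comm_ring_1) (p + q) = map_poly of_int p + map_poly of_int q"
  by (intro poly_eqI) (simp add: coeff_map_poly)

lemma mpi_smult: "map_poly (of_int :: int \<Rightarrow> 'a::comm_ring_1) (smult c p) = smult (of_int c) (map_poly of_int p)"
  by (intro poly_eqI) (simp add: coeff_map_poly)

lemma mpi_mult: "map_poly (of_int :: int \<Rightarrow> 'a::comm_ring_1) (p * q) = map_poly of_int p * map_poly of_int q"
  by (induction p) (simp_all add: map_poly_pCons mpi_add mpi_smult)

lemma poly_bound: fixes p :: "'a::comm_ring_1 poly" assumes "degree p \<le> N" shows "poly p y = (\<Sum>i\<le>N. coeff p i * y ^ i)"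
proof -
  have "poly p y = (\<Sum>i\<le>degree p. coeff p i * y ^ i)" by (rule poly_altdef)
  also have "\<dots> = (\<Sum>i\<le>N. coeff p i * y ^ i)"
    by (rule sum.mono_neutral_left) (use assms in \<open>auto simp: coeff_eq_0\<close>)
  finally show ?thesis .
qed

lemma sum_even_part:
  fixes h :: "nat \<Rightarrow> 'a::comm_monoid_add"
  assumes "\<forall>i. h (2*i+1) = 0"
  shows "(\<Sum>j<2*m. h j) = (\<Sum>i<m. h (2*i))"
proof (induction m)
  case 0 then show ?case by simp
next
  case (Suc m)
  have "(\<Sum>j<2*Suc m. h j) = (\<Sum>j<2*m. h j) + h (2*m) + h (2*m+1)"
    by (simp add: add.assoc)
  then show ?case using Suc assms by simp
qed

lemma algebraic_int_square:
  fixes x :: real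
  assumes "algebraic_int x"
  shows "algebraic_int (x^2)"
proof -
  obtain f :: "int poly" where f: "poly (map_poly of_int f) x = 0" "lead_coeff f = 1"
    using assms by (auto simp: algebraic_int_altdef_ipoly)
  define d where "d = degree f"
  define F where "F = f * (f \<circ>\<^sub>p [:0, -1:])"
  have degF: "degree F = 2 * d"
    unfolding F_def d_def using f(2)
    by (subst degree_mult_eq) (auto simp: degree_pcompose pcompose_eq_0_iff)
  have "lead_coeff (f \<circ>\<^sub>p [:0, -1:]) = lead_coeff f * (-1) ^ degree f"
    by (subst lead_coeff_comp) auto
  then have leadF: "coeff F (2*d) = (-1)^d"
    using degF f(2) unfolding d_def by (metis F_def lead_coeff_mult mult_1)
  have "[:0, -1::int:] \<circ>\<^sub>p [:0, -1:] = [:0, 1:]" by (simp add: pcompose_pCons)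
  then have "F \<circ>\<^sub>p [:0, -1:] = F"
    unfolding F_def by (simp add: pcompose_mult pcompose_assoc[symmetric] mult.commute)
  then have Fsym: "(-1)^i * coeff F i = coeff F i" for i
    by (metis coeff_pcompose_linear)
  have Fodd: "coeff F (2*i+1) = 0" for i
    using Fsym[of "2*i+1"] by simp
  define G where "G = (\<Sum>i\<le>d. monom ((-1)^d * coeff F (2*i)) i)"
  have cG: "coeff G i = (if i \<le> d then (-1)^d * coeff F (2*i) else 0)" for i
    unfolding G_def by (simp add: coeff_sum coeff_monom)
  have degG: "degree G = d"
  proof (rule antisym)
    show "degree G \<le> d" by (rule degree_le) (simp add: cG)
    show "d \<le> degree G" by (rule le_degree) (simp add: cG leadF)
  qed
  have leadG: "lead_coeff G = 1" using degG cG leadF by simp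
  have "poly (map_poly of_int G) (x^2) = (\<Sum>i\<le>d. of_int (coeff G i) * (x^2) ^ i)"
    by (subst poly_bound[where N=d]) (simp_all add: degree_map_poly degG coeff_map_poly)
  also have "\<dots> = (-1)^d * (\<Sum>i<Suc d. of_int (coeff F (2*i)) * x ^ (2*i))"
    by (simp add: cG sum_distrib_left power_mult lessThan_Suc_atMost mult.assoc)
  also have "(\<Sum>i<Suc d. of_int (coeff F (2*i)) * x ^ (2*i)) = (\<Sum>j<2*Suc d. of_int (coeff F j) * x ^ j)"
    by (rule sum_even_part[symmetric]) (use Fodd in simp)
  also have "\<dots> = (\<Sum>j\<le>Suc (2*d). of_int (coeff F j) * x ^ j)"
    by (simp add: lessThan_Suc_atMost)
  also have "\<dots> = poly (map_poly of_int F) x"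
    by (subst poly_bound[where N="Suc (2*d)"]) (simp_all add: degree_map_poly degF coeff_map_poly)
  also have "\<dots> = 0" by (simp add: F_def mpi_mult f(1))
  finally show ?thesis unfolding algebraic_int_altdef_ipoly using leadG by auto
qed



lemma quad_alg_int:
  fixes u :: real and A B C :: int
  assumes alg: "algebraic_int u" and irr: "u \<notin> \<rat>"
    and eq0: "of_int A * u^2 + of_int B * u + of_int C = 0" and A0: "A \<noteq> 0"
  shows "A dvd C"
proof -
  obtain f :: "int poly" where f: "poly (map_poly of_int f) u = 0" "lead_coeff f = 1"
    using alg by (auto simp: algebraic_int_altdef_ipoly)
  have f0: "f \<noteq> 0" using f(2) by auto
  define g where "g = [:C, B, A:]"
  have degg: "degree g = 2" using A0 by (simp add: g_def)
  have g0: "g \<noteq> 0" using A0 by (simp add: g_def)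
  have lg: "coeff g (degree g) = A" using degg by (simp add: g_def numeral_2_eq_2)
  obtain q r where qr: "pseudo_divmod f g = (q, r)" by (cases "pseudo_divmod f g") auto
  define k where "k = Suc (degree f) - degree g"
  have eq: "smult (A ^ k) f = g * q + r"
    using pseudo_divmod(1)[OF g0 qr] lg by (simp add: k_def)
  have rdeg: "r = 0 \<or> degree r < 2" using pseudo_divmod(2)[OF g0 qr] degg by simp
  have gu: "poly (map_poly of_int g) u = 0"
    using eq0 by (simp add: g_def map_poly_pCons algebra_simps power2_eq_square)
  have "poly (map_poly (of_int :: int \<Rightarrow> real) (smult (A ^ k) f)) u = 0"
    by (simp add: mpi_smult f(1))
  then have ru: "poly (map_poly (of_int :: int \<Rightarrow> real) r) u = 0"
    unfolding eq by (simp add: mpi_add mpi_mult gu)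
  have r0: "r = 0"
  proof (rule ccontr)
    assume "r \<noteq> 0"
    then have "degree r \<le> 1" using rdeg by simp
    then have "poly (map_poly (of_int :: int \<Rightarrow> real) r) u = of_int (coeff r 0) + of_int (coeff r 1) * u"
      by (subst poly_bound[where N=1]) (simp_all add: degree_map_poly coeff_map_poly)
    with ru have lin: "of_int (coeff r 0) + of_int (coeff r 1) * u = 0" by simp
    show False
    proof (cases "coeff r 1 = 0")
      case True
      with lin have "coeff r 0 = 0" by simp
      with True \<open>degree r \<le> 1\<close> have "r = 0"
        by (metis coeff_eq_0 le_degree le_antisym le_zero_eq linorder_not_le One_nat_def less_Suc0 leading_coeff_0_iff)
      with \<open>r \<noteq> 0\<close> show False by simp
    next
      case False
      then have "u = - of_int (coeff r 0) / of_int (coeff r 1)" using lin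
        by (simp add: field_simps)
      then have "u \<in> \<rat>" by simp
      with irr show False by simp
    qed
  qed
  with eq have eq2: "smult (A ^ k) f = g * q" by simp
  have q0: "q \<noteq> 0" using eq2 f0 A0 by auto
  have cf: "content f = 1"
  proof -
    have "content f dvd 1" using content_dvd_coeff[of f "degree f"] f(2) by simp
    then show ?thesis by (metis normalize_content is_unit_normalize)
  qed
  have c1: "normalize (A ^ k) = content g * content q"
    using arg_cong[OF eq2, of content] by (simp add: content_mult cf)
  have "lead_coeff (smult (A ^ k) f) = A ^ k" using f(2) by simp
  then have c2: "A ^ k = A * lead_coeff q"
    using eq2 lg by (simp add: lead_coeff_mult)
  have "A * content q dvd A * lead_coeff q" by (simp add: content_dvd_coeff)
  then have h: "A * content q dvd A ^ k" using c2 by simp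
  have "\<bar>A ^ k\<bar> = content g * content q" using c1 by simp
  then have "A * content q dvd content g * content q" using h by (metis dvd_abs_iff)
  then have "A dvd content g"
    using q0 by (metis content_eq_zero_iff dvd_mult_cancel_right mult.commute)
  also have "content g dvd coeff g 0" by (rule content_dvd_coeff)
  finally show ?thesis by (simp add: g_def)
qed



lemma sum4: "(\<Sum>i\<le>(4::nat). f i) = f 0 + f 1 + f 2 + f 3 + (f 4::'a::comm_monoid_add)"
  by (simp add: numeral_eq_Suc)
lemma sum3: "(\<Sum>i\<le>(3::nat). f i) = f 0 + f 1 + f 2 + (f 3::'a::comm_monoid_add)"
  by (simp add: numeral_eq_Suc)
lemma sum2: "(\<Sum>i\<le>(2::nat). f i) = f 0 + f 1 + (f 2::'a::comm_monoid_add)"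
  by (simp add: numeral_eq_Suc)
lemma sum1: "(\<Sum>i\<le>(1::nat). f i) = f 0 + (f 1::'a::comm_monoid_add)"
  by simp
lemma sum0: "(\<Sum>i\<le>(0::nat). f i) = (f 0::'a::comm_monoid_add)"
  by simp

lemma L0: "1 \<le> j \<Longrightarrow> coeff (cheb_T (j+0)) j = 2^(j-1)"
  using cheb_lead[of "j-1"] by simp
lemma L1: "coeff (cheb_T (j+1)) j = 0" by (rule cheb_coeff_parity) simp
lemma L3: "coeff (cheb_T (j+3)) j = 0" by (rule cheb_coeff_parity) simp
lemma L5: "coeff (cheb_T (j+5)) j = 0" by (rule cheb_coeff_parity) simp
lemma L2: "1 \<le> j \<Longrightarrow> coeff (cheb_T (j+2)) j = -(real j + 2) * 2^(j-1)"
  using cheb_off2[of "j-1"] by (simp add: add.commute)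
lemma L4: "1 \<le> j \<Longrightarrow> coeff (cheb_T (j+4)) j = (real j + 4) * (real j + 1) * 2^(j-1) / 2"
  using cheb_off4[of "j-1"] by (simp add: add.commute)

lemma top_expand:
  fixes Q :: "real poly" assumes "degree Q = j + t"
  shows "coeff Q j = (\<Sum>i\<le>t. cheb_coeffs Q (j+i) * coeff (cheb_T (j+i)) j)"
proof -
  have "coeff Q j = (\<Sum>k\<le>j+t. cheb_coeffs Q k * coeff (cheb_T k) j)"
    using coeff_via_cheb[of Q j] unfolding assms .
  also have "\<dots> = (\<Sum>i\<le>t. cheb_coeffs Q (j+i) * coeff (cheb_T (j+i)) j)"
    by (rule sum_top) (simp add: cheb_coeff_gt)
  finally show ?thesis .
qed

context fixes Q :: "real poly" and j :: nat assumes j1: "1 \<le> j"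
begin
lemma T0: "degree Q = j + 0 \<Longrightarrow> coeff Q j = cheb_coeffs Q j * 2^(j-1)"
  by (subst top_expand[of Q j 0]) (simp_all only: sum0 L0[OF j1], simp)
lemma T1: "degree Q = j + 1 \<Longrightarrow> coeff Q j = cheb_coeffs Q j * 2^(j-1)"
  by (subst top_expand[of Q j 1]) (simp_all only: sum1 L0[OF j1] L1, simp)
lemma T2: "degree Q = j + 2 \<Longrightarrow> coeff Q j = cheb_coeffs Q j * 2^(j-1) + cheb_coeffs Q (j+2) * (-(real j + 2) * 2^(j-1))"
  by (subst top_expand[of Q j 2]) (simp_all only: sum2 L0[OF j1] L1 L2[OF j1], simp)
lemma T3: "degree Q = j + 3 \<Longrightarrow> coeff Q j = cheb_coeffs Q j * 2^(j-1) + cheb_coeffs Q (j+2) * (-(real j + 2) * 2^(j-1))"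
  by (subst top_expand[of Q j 3]) (simp_all only: sum3 L0[OF j1] L1 L2[OF j1] L3, simp)
lemma T4: "degree Q = j + 4 \<Longrightarrow> coeff Q j = cheb_coeffs Q j * 2^(j-1) + cheb_coeffs Q (j+2) * (-(real j + 2) * 2^(j-1))
   + cheb_coeffs Q (j+4) * ((real j + 4) * (real j + 1) * 2^(j-1) / 2)"
  by (subst top_expand[of Q j 4]) (simp_all only: sum4 L0[OF j1] L1 L2[OF j1] L3 L4[OF j1], simp)
end

lemma sum5: "(\<Sum>i\<le>(5::nat). f i) = f 0 + f 1 + f 2 + f 3 + f 4 + (f 5::'a::comm_monoid_add)"
  by (simp add: numeral_eq_Suc)

lemma T5: "1 \<le> j \<Longrightarrow> degree Q = j + 5 \<Longrightarrow> coeff Q j = cheb_coeffs Q j * 2^(j-1) + cheb_coeffs Q (j+2) * (-(real j + 2) * 2^(j-1))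
   + cheb_coeffs Q (j+4) * ((real j + 4) * (real j + 1) * 2^(j-1) / 2)"
  by (subst top_expand[of Q j 5]) (simp_all only: sum5 L0 L1 L2 L3 L4 L5, simp)


lemma B5: "real ((j+5) choose 5) = (real j+5)*(real j+4)*(real j+3)*(real j+2)*(real j+1)/120"
  by (subst binomial_altdef_of_nat) (simp_all add: numeral_eq_Suc prod.atLeast0_lessThan_Suc of_nat_diff field_simps)
lemma B4: "real ((j+4) choose 4) = (real j+4)*(real j+3)*(real j+2)*(real j+1)/24"
  by (subst binomial_altdef_of_nat) (simp_all add: numeral_eq_Suc prod.atLeast0_lessThan_Suc of_nat_diff field_simps)
lemma B3: "real ((j+3) choose 3) = (real j+3)*(real j+2)*(real j+1)/6"
  by (subst binomial_altdef_of_nat) (simp_all add: numeral_eq_Suc prod.atLeast0_lessThan_Suc of_nat_diff field_simps)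
lemma B2: "real ((j+2) choose 2) = (real j+2)*(real j+1)/2"
  by (subst binomial_altdef_of_nat) (simp_all add: numeral_eq_Suc prod.atLeast0_lessThan_Suc of_nat_diff field_simps)


lemma shift_expand:
  fixes Q :: "real poly" assumes "degree Q = j + t"
  shows "coeff (Q \<circ>\<^sub>p [:a, 1:]) j = (\<Sum>s\<le>t. coeff Q (j+s) * (real ((j+s) choose s) * a ^ s))"
proof -
  have "coeff (Q \<circ>\<^sub>p [:a, 1:]) j = (\<Sum>i\<le>j+t. coeff Q i * (if j \<le> i then of_nat (i choose j) * a ^ (i - j) else 0))"
    using coeff_pcompose_shift[of Q a j] unfolding assms .
  also have "\<dots> = (\<Sum>s\<le>t. coeff Q (j+s) * (if j \<le> j+s then of_nat ((j+s) choose j) * a ^ (j+s - j) else 0))"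
    by (rule sum_top) simp
  also have "\<dots> = (\<Sum>s\<le>t. coeff Q (j+s) * (real ((j+s) choose s) * a ^ s))"
    by (rule sum.cong[OF refl]) (simp add: binomial_symmetric[of j "j+_"])
  finally show ?thesis .
qed

lemma S1: "degree Q = j + 1 \<Longrightarrow> coeff (Q \<circ>\<^sub>p [:a, 1:]) j = coeff Q j + coeff Q (j+1) * ((real j + 1) * a)"
  by (subst shift_expand[of Q j 1]) (simp_all only: sum1, simp)

lemma S3: "degree Q = j + 3 \<Longrightarrow> coeff (Q \<circ>\<^sub>p [:a, 1:]) j = coeff Q j + coeff Q (j+1) * ((real j + 1) * a)
   + coeff Q (j+2) * ((real j+2)*(real j+1)/2 * a^2) + coeff Q (j+3) * ((real j+3)*(real j+2)*(real j+1)/6 * a^3)"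
  by (subst shift_expand[of Q j 3]) (simp_all only: sum3 B2 B3, simp)

lemma S5: "degree Q = j + 5 \<Longrightarrow> coeff (Q \<circ>\<^sub>p [:a, 1:]) j = coeff Q j + coeff Q (j+1) * ((real j + 1) * a)
   + coeff Q (j+2) * ((real j+2)*(real j+1)/2 * a^2) + coeff Q (j+3) * ((real j+3)*(real j+2)*(real j+1)/6 * a^3)
   + coeff Q (j+4) * ((real j+4)*(real j+3)*(real j+2)*(real j+1)/24 * a^4)
   + coeff Q (j+5) * ((real j+5)*(real j+4)*(real j+3)*(real j+2)*(real j+1)/120 * a^5)"
  by (subst shift_expand[of Q j 5]) (simp_all only: sum5 B2 B3 B4 B5, simp)



lemma part1:
  fixes Q :: "real poly" and \<delta> :: real and m :: nat
  assumes dQ: "degree Q = m + 6" and evm: "even m"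
    and ev: "\<And>j. odd j \<Longrightarrow> coeff (Q \<circ>\<^sub>p [:\<delta>, 1:]) j = 0"
    and c4: "cheb_coeffs Q (m+4) = 0" and c3: "cheb_coeffs Q (m+3) = 0" and d0: "\<delta> \<noteq> 0"
  shows "(real m + 4) * (real m + 5) * (4 * \<delta>)^2 = 12"
proof -
  define c where "c = cheb_coeffs Q"
  define e where "e = (2::real) ^ m"
  define M where "M = real m"
  have e0: "e > 0" by (simp add: e_def)
  have q6: "coeff Q (m+6) = c (m+6) * (32 * e)"
    using T0[of "m+6" Q] dQ by (simp add: c_def e_def power_add)
  have q5: "coeff Q (m+5) = c (m+5) * (16 * e)"
    using T1[of "m+5" Q] dQ by (simp add: c_def e_def power_add)
  have q4: "coeff Q (m+4) = c (m+6) * (-(M+6) * (8 * e))"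
    using T2[of "m+4" Q] dQ c4 by (simp add: c_def e_def M_def power_add add.commute)
  have q3: "coeff Q (m+3) = c (m+5) * (-(M+5) * (4 * e))"
    using T3[of "m+3" Q] dQ c3 by (simp add: c_def e_def M_def power_add add.commute)
  have E1: "coeff Q (m+5) + coeff Q (m+6) * ((M + 6) * \<delta>) = 0"
    using S1[of Q "m+5" \<delta>] dQ ev[of "m+5"] evm by (simp add: M_def add.commute)
  have E3: "coeff Q (m+3) + coeff Q (m+4) * ((M + 4) * \<delta>)
   + coeff Q (m+5) * ((M+5)*(M+4)/2 * \<delta>^2) + coeff Q (m+6) * ((M+6)*(M+5)*(M+4)/6 * \<delta>^3) = 0"
    using S3[of Q "m+3" \<delta>] dQ ev[of "m+3"] evm by (simp add: M_def add.commute)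
  have lead: "c (m+6) \<noteq> 0"
  proof
    assume "c (m+6) = 0"
    then have "coeff Q (m+6) = 0" using q6 by simp
    then have "Q = 0" using dQ by (metis leading_coeff_0_iff)
    then show False using dQ by simp
  qed
  have "(16 * e) * (c (m+5) + 2 * (M+6) * \<delta> * c (m+6)) = 0"
    using E1 unfolding q5 q6 by (simp add: algebra_simps)
  then have "c (m+5) + 2 * (M+6) * \<delta> * c (m+6) = 0"
    using e0 by (simp only: mult_eq_0_iff) simp
  then have c5: "c (m+5) = -2 * (M+6) * \<delta> * c (m+6)"
    by (simp add: algebra_simps add_eq_0_iff)
  have "8 * (M+6) * \<delta> * c (m+6) * e * (1 - 4/3 * (M+5) * (M+4) * \<delta>^2) = 0"
    using E3 unfolding q3 q4 q5 q6 c5 by (simp add: field_simps power2_eq_square power3_eq_cube)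
  then have "1 - 4/3 * (M+5) * (M+4) * \<delta>^2 = 0"
    using lead d0 e0 by (simp add: M_def)
  then show ?thesis by (simp add: M_def field_simps power2_eq_square)
qed



lemma part2:
  fixes Q :: "real poly" and \<delta> :: real and m :: nat
  assumes dQ: "degree Q = m + 6" and evm: "even m"
    and ev: "\<And>j. odd j \<Longrightarrow> coeff (Q \<circ>\<^sub>p [:\<delta>, 1:]) j = 0"
    and c4: "cheb_coeffs Q (m+4) = 0" and c2: "cheb_coeffs Q (m+2) = 0" and c1: "cheb_coeffs Q (m+1) = 0"
    and d0: "\<delta> \<noteq> 0"
  shows "120 - 30 * (real m + 4) * (real m + 3) * (4 * \<delta>)^2 + (real m + 5) * (real m + 4) * (real m + 3) * (real m + 2) * ((4 * \<delta>)^2)^2 = 0"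
proof -
  define c where "c = cheb_coeffs Q"
  define e where "e = (2::real) ^ m"
  define M where "M = real m"
  have e0: "e > 0" by (simp add: e_def)
  have q6: "coeff Q (m+6) = c (m+6) * (32 * e)"
    using T0[of "m+6" Q] dQ by (simp add: c_def e_def power_add)
  have q5: "coeff Q (m+5) = c (m+5) * (16 * e)"
    using T1[of "m+5" Q] dQ by (simp add: c_def e_def power_add)
  have q4: "coeff Q (m+4) = c (m+6) * (-(M+6) * (8 * e))"
    using T2[of "m+4" Q] dQ c4 by (simp add: c_def e_def M_def power_add add.commute)
  have q3: "coeff Q (m+3) = c (m+3) * (4 * e) + c (m+5) * (-(M+5) * (4 * e))"
    using T3[of "m+3" Q] dQ by (simp add: c_def e_def M_def power_add add.commute)
  have s3: "Suc (Suc (Suc m)) = m + 3" by simp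
  have s4: "Suc (Suc (Suc (Suc m))) = m + 4" by simp
  have q2: "coeff Q (m+2) = c (m+6) * ((M+6) * (M+3) * e)"
    using T4[of "m+2" Q] dQ c2 c4 by (simp add: s4 c_def e_def M_def power_add add.commute)
  have q1: "coeff Q (m+1) = c (m+3) * (-(M+3) * e) + c (m+5) * ((M+5) * (M+2) * e / 2)"
    using T5[of "m+1" Q] dQ c1 by (simp add: s3 c_def e_def M_def power_add add.commute)
  have E1: "coeff Q (m+5) + coeff Q (m+6) * ((M + 6) * \<delta>) = 0"
    using S1[of Q "m+5" \<delta>] dQ ev[of "m+5"] evm by (simp add: M_def add.commute)
  have E3: "coeff Q (m+3) + coeff Q (m+4) * ((M + 4) * \<delta>)
   + coeff Q (m+5) * ((M+5)*(M+4)/2 * \<delta>^2) + coeff Q (m+6) * ((M+6)*(M+5)*(M+4)/6 * \<delta>^3) = 0"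
    using S3[of Q "m+3" \<delta>] dQ ev[of "m+3"] evm by (simp add: M_def add.commute)
  have E5: "coeff Q (m+1) + coeff Q (m+2) * ((M + 2) * \<delta>)
   + coeff Q (m+3) * ((M+3)*(M+2)/2 * \<delta>^2) + coeff Q (m+4) * ((M+4)*(M+3)*(M+2)/6 * \<delta>^3)
   + coeff Q (m+5) * ((M+5)*(M+4)*(M+3)*(M+2)/24 * \<delta>^4)
   + coeff Q (m+6) * ((M+6)*(M+5)*(M+4)*(M+3)*(M+2)/120 * \<delta>^5) = 0"
    using S5[of Q "m+1" \<delta>] dQ ev[of "m+1"] evm by (simp add: s3 M_def add.commute)
  have lead: "c (m+6) \<noteq> 0"
  proof
    assume "c (m+6) = 0"
    then have "coeff Q (m+6) = 0" using q6 by simp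
    then have "Q = 0" using dQ by (metis leading_coeff_0_iff)
    then show False using dQ by simp
  qed
  have "(16 * e) * (c (m+5) + 2 * (M+6) * \<delta> * c (m+6)) = 0"
    using E1 unfolding q5 q6 by (simp add: algebra_simps)
  then have "c (m+5) + 2 * (M+6) * \<delta> * c (m+6) = 0"
    using e0 by (simp only: mult_eq_0_iff) simp
  then have c5: "c (m+5) = -2 * (M+6) * \<delta> * c (m+6)"
    by (simp add: algebra_simps add_eq_0_iff)
  have "(4 * e) * (c (m+3) - c (m+6) * \<delta> * (-2 * (M+6) + 8/3 * (M+6) * (M+5) * (M+4) * \<delta>^2)) = 0"
    using E3 unfolding q3 q4 q5 q6 c5 by (simp add: field_simps power2_eq_square power3_eq_cube)
  then have "c (m+3) - c (m+6) * \<delta> * (-2 * (M+6) + 8/3 * (M+6) * (M+5) * (M+4) * \<delta>^2) = 0"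
    using e0 by (simp only: mult_eq_0_iff) simp
  then have c3: "c (m+3) = c (m+6) * \<delta> * (-2 * (M+6) + 8/3 * (M+6) * (M+5) * (M+4) * \<delta>^2)"
    by simp
  have "e * c (m+6) * \<delta> * (M+6) / 60 * (120 - 30 * (M + 4) * (M + 3) * (4 * \<delta>)^2 + (M + 5) * (M + 4) * (M + 3) * (M + 2) * ((4 * \<delta>)^2)^2) = 0"
  proof -
    have "e * c (m+6) * \<delta> * (M+6) / 60 * (120 - 30 * (M + 4) * (M + 3) * (4 * \<delta>)^2 + (M + 5) * (M + 4) * (M + 3) * (M + 2) * ((4 * \<delta>)^2)^2)
      = coeff Q (m+1) + coeff Q (m+2) * ((M + 2) * \<delta>)
   + coeff Q (m+3) * ((M+3)*(M+2)/2 * \<delta>^2) + coeff Q (m+4) * ((M+4)*(M+3)*(M+2)/6 * \<delta>^3)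
   + coeff Q (m+5) * ((M+5)*(M+4)*(M+3)*(M+2)/24 * \<delta>^4)
   + coeff Q (m+6) * ((M+6)*(M+5)*(M+4)*(M+3)*(M+2)/120 * \<delta>^5)"
      unfolding q1 q2 q3 q4 q5 q6 c5 c3 by (simp add: field_simps eval_nat_numeral)
    then show ?thesis using E5 by (rule trans)
  qed
  then show ?thesis using lead d0 e0 by (simp add: M_def)
qed



theorem corollary3p3:
  fixes R :: "real poly" and \<delta> :: real and Q :: "real poly" and n :: nat
  assumes hQ: "Q = R \<circ>\<^sub>p ([:- \<delta>, 1:] ^ 2)"
    and hn: "n = degree Q"
  shows "(n \<ge> 6 \<and> Ch 2 Q = 0 \<and> Ch 3 Q = 0 \<and> \<delta> \<noteq> 0
            \<longrightarrow> \<not> algebraic_int (complex_of_real (4 * \<delta>)))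
       \<and> (n \<ge> 9 \<and> Ch 2 Q = 0 \<and> Ch 4 Q = 0 \<and> Ch 5 Q = 0 \<and> \<delta> \<noteq> 0
            \<longrightarrow> \<not> algebraic_int (complex_of_real (4 * \<delta>)))"
proof -
  have ev: "\<And>j. odd j \<Longrightarrow> coeff (Q \<circ>\<^sub>p [:\<delta>, 1:]) j = 0"
    using even_shift[OF hQ] by blast
  have "degree ([:- \<delta>, 1:] ^ 2) = 2" by (simp add: degree_linear_power)
  then have evn: "even n" using hn hQ by (simp add: degree_pcompose)
  have CH: "\<And>i. Ch i Q = cheb_coeffs Q (n - i)" by (simp add: Ch_def hn)
  show ?thesis
  proof (intro conjI impI)
    assume H: "6 \<le> n \<and> Ch 2 Q = 0 \<and> Ch 3 Q = 0 \<and> \<delta> \<noteq> 0"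
    obtain m where m: "n = m + 6" using H by (metis add.commute le_iff_add)
    have evm: "even m" using evn m by simp
    have key: "(real m + 4) * (real m + 5) * (4 * \<delta>)^2 = 12"
    proof (rule part1[where Q=Q])
      show "degree Q = m + 6" using hn m by simp
      show "cheb_coeffs Q (m+4) = 0" using H CH[of 2] m by (simp add: add.commute)
      show "cheb_coeffs Q (m+3) = 0" using H CH[of 3] m by (simp add: add.commute)
    qed (use evm ev H in auto)
    show "\<not> algebraic_int (complex_of_real (4 * \<delta>))"
    proof
      assume "algebraic_int (complex_of_real (4 * \<delta>))"
      then have a: "algebraic_int (4 * \<delta>)" by (simp only: algebraic_int_of_real_iff)
      have ge: "(real m + 4) * (real m + 5) \<ge> 20"
      proof -
        have "(4::real) * 5 \<le> (real m + 4) * (real m + 5)" by (intro mult_mono) auto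
        then show ?thesis by simp
      qed
      show False
      proof (cases "4 * \<delta> \<in> \<rat>")
        case True
        then have "4 * \<delta> \<in> \<int>" using rational_algebraic_int_is_int a by blast
        then obtain z where z: "4 * \<delta> = of_int z" by (auto elim: Ints_cases)
        have "z \<noteq> 0" using z H by auto
        then have "1 \<le> z^2" by (metis int_one_le_iff_zero_less zero_less_power2)
        then have "1 \<le> (4 * \<delta>)^2" unfolding z by (metis of_int_le_iff of_int_1 of_int_power)
        then have "20 * 1 \<le> (real m + 4) * (real m + 5) * (4 * \<delta>)^2"
          using ge by (intro mult_mono) auto
        then show False using key by simp
      next
        case False
        have "of_int (int ((m + 4) * (m + 5))) * (4 * \<delta>)^2 + of_int 0 * (4 * \<delta>) + of_int (-12) = 0"
          using key by simp
        then have "int ((m + 4) * (m + 5)) dvd -12"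
          by (rule quad_alg_int[OF a False]) simp
        then have "int ((m + 4) * (m + 5)) \<le> 12"
          by (intro zdvd_imp_le) auto
        moreover have "(m + 4) * (m + 5) \<ge> 20" using mult_mono[of 4 "m+4" 5 "m+5"] by simp
        ultimately show False by linarith
      qed
    qed
  next
    assume H: "9 \<le> n \<and> Ch 2 Q = 0 \<and> Ch 4 Q = 0 \<and> Ch 5 Q = 0 \<and> \<delta> \<noteq> 0"
    have "6 \<le> n" using H by simp
    then obtain m where m: "n = m + 6" by (metis add.commute le_iff_add)
    have m3: "m \<ge> 3" using H m by simp
    have evm: "even m" using evn m by simp
    define u where "u = (4 * \<delta>)^2"
    define M where "M = real m"
    have key: "120 - 30 * (M + 4) * (M + 3) * u + (M + 5) * (M + 4) * (M + 3) * (M + 2) * u^2 = 0"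
      unfolding u_def M_def
    proof (rule part2[where Q=Q])
      show "degree Q = m + 6" using hn m by simp
      show "cheb_coeffs Q (m+4) = 0" using H CH[of 2] m by (simp add: add.commute)
      show "cheb_coeffs Q (m+2) = 0" using H CH[of 4] m by (simp add: add.commute)
      show "cheb_coeffs Q (m+1) = 0" using H CH[of 5] m by (simp add: add.commute)
    qed (use evm ev H in auto)
    show "\<not> algebraic_int (complex_of_real (4 * \<delta>))"
    proof
      assume "algebraic_int (complex_of_real (4 * \<delta>))"
      then have "algebraic_int (4 * \<delta>)" by (simp only: algebraic_int_of_real_iff)
      then have a: "algebraic_int u" unfolding u_def by (rule algebraic_int_square)
      have u0: "u > 0" using H by (simp add: u_def)
      have M3: "M \<ge> 3" using m3 by (simp add: M_def)
      show False
      proof (cases "u \<in> \<rat>")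
        case True
        then have "u \<in> \<int>" using rational_algebraic_int_is_int a by blast
        then obtain z where z: "u = of_int z" by (auto elim: Ints_cases)
        then have "z > 0" using u0 by simp
        then have u1: "u \<ge> 1" using z by simp
        have "(M + 5) * (M + 2) \<ge> 8 * 5" using M3 by (intro mult_mono) auto
        then have h1: "(M + 5) * (M + 2) - 30 > 0" by simp
        have h2: "(M + 4) * (M + 3) > 0" using M3 by simp
        have "(M + 5) * (M + 4) * (M + 3) * (M + 2) * u - 30 * (M + 4) * (M + 3)
             = (M + 4) * (M + 3) * ((M + 5) * (M + 2) * u - 30)" by (simp add: algebra_simps)
        moreover have "(M + 5) * (M + 2) * u \<ge> (M + 5) * (M + 2) * 1"
          using u1 M3 by (intro mult_left_mono) auto
        ultimately have "(M + 5) * (M + 4) * (M + 3) * (M + 2) * u - 30 * (M + 4) * (M + 3) > 0"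
          using h1 h2 by (simp add: mult_pos_pos)
        then have "u * ((M + 5) * (M + 4) * (M + 3) * (M + 2) * u - 30 * (M + 4) * (M + 3)) > 0"
          using u0 by simp
        then have "120 - 30 * (M + 4) * (M + 3) * u + (M + 5) * (M + 4) * (M + 3) * (M + 2) * u^2 > 0"
          by (simp add: algebra_simps power2_eq_square)
        then show False using key by simp
      next
        case False
        let ?A = "int ((m + 5) * (m + 4) * (m + 3) * (m + 2))"
        have "of_int ?A * u^2 + of_int (- 30 * int ((m + 4) * (m + 3))) * u + of_int 120 = 0"
          using key by (simp add: M_def algebra_simps)
        moreover have A0: "?A \<noteq> 0"
          using of_nat_eq_0_iff[of "(m + 5) * (m + 4) * (m + 3) * (m + 2)"] by (metis mult_eq_0_iff add_is_0 zero_neq_numeral)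
        ultimately have "?A dvd 120"
          by (intro quad_alg_int[OF a False])
        then have "?A \<le> 120" by (intro zdvd_imp_le) auto
        moreover have "(m + 5) * (m + 4) * (m + 3) * (m + 2) \<ge> 8 * 7 * 6 * 5"
          using m3 by (intro mult_mono) auto
        ultimately show False by linarith
      qed
    qed
  qed
qed


end
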